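(* For integers $q\ge1$, $p\ge0$ and all $(\beta,a)\in\mathcal G_H$, $$I_{p,q}(\beta,a)=2\,\xi^q\sum_{\ell=0}^{\lfloor p/2\rfloor}\binom{p}{2\ell}B\!\left(\ell+\tfrac12,q\right)(2\xi)^{2\ell}w^{p-2\ell},$$ where $w=w(\beta,a)$, $\xi=\xi(\beta,a)$ are as below and $B$ is the Beta function.
   Context: Poincaré disk $\mathbb D$ with metric $c^{-2}|dz|^2$, $c=\frac{1-|z|^2}{2}$. $\mathcal G_H=\mathbb R/2\pi\mathbb Z\times\mathbb R$ parametrizes unit-speed geodesics $z_{\beta,a}(t)=e^{i\beta}\frac{(2+ia)\tanh(t/2)+ia}{ia\tanh(t/2)-2+ia}$, $t\in\mathbb R$. $I_{p,q}(\beta,a)=\int_{\mathbb R}z_{\beta,a}(t)^p\,\dot z_{\beta,a}(t)^q\,dt$. With $\omega=\beta+\tan^{-1}a+\pi/2$, set $w(\beta,a)=-\frac{a\,e^{i\omega}}{\sqrt{1+a^2}}$ and $\xi(\beta,a)=\frac{i\,e^{i\omega}}{2\sqrt{1+a^2}}$; equivalently, if $z_\pm=\lim_{t\to\pm\infty}z_{\beta,a}(t)\in\mathbb S^1$, then $w=\frac{z_++z_-}{2}$, $\xi=\frac{z_+-z_-}{4}$. *)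

theory Defs
  imports "HOL-Analysis.Analysis"
begin

text \<open>Unit-speed geodesic of the Poincare disk parametrized by (beta, a).\<close>
definition geod :: "real \<Rightarrow> real \<Rightarrow> real \<Rightarrow> complex" where
  "geod \<beta> a t = cis \<beta> *
     (((2 + \<i> * of_real a) * of_real (tanh (t/2)) + \<i> * of_real a) /
      (\<i> * of_real a * of_real (tanh (t/2)) - 2 + \<i> * of_real a))"

definition geod_dot :: "real \<Rightarrow> real \<Rightarrow> real \<Rightarrow> complex" where
  "geod_dot \<beta> a t = vector_derivative (geod \<beta> a) (at t)"

definition omega_ga :: "real \<Rightarrow> real \<Rightarrow> real" where
  "omega_ga \<beta> a = \<beta> + arctan a + pi/2"

definition w_ga :: "real \<Rightarrow> real \<Rightarrow> complex" where
  "w_ga \<beta> a = - (of_real a * cis (omega_ga \<beta> a)) / of_real (sqrt (1 + a^2))"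

definition xi_ga :: "real \<Rightarrow> real \<Rightarrow> complex" where
  "xi_ga \<beta> a = (\<i> * cis (omega_ga \<beta> a)) / of_real (2 * sqrt (1 + a^2))"

end

theory Submission
  imports Defs "HOL-Complex_Analysis.Complex_Analysis"
begin


lemma nonpos_Ints_pos: "(x::real) > 0 \<Longrightarrow> x \<notin> \<int>\<^sub>\<le>\<^sub>0"
  by (auto elim!: nonpos_Ints_cases)

lemma Beta_a_1: assumes "(a::real) > 0" shows "Beta a 1 = 1/a"
proof -
  have a: "a \<notin> \<int>\<^sub>\<le>\<^sub>0" using assms by (rule nonpos_Ints_pos)
  have "Gamma a \<noteq> 0" using a Gamma_eq_zero_iff by auto
  thus ?thesis unfolding Beta_def using Gamma_plus1[OF a] assms by simp
qed

lemma J_int_aux: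
  "((\<lambda>x::real. x^k * (1-x\<^sup>2)^n) has_integral
     (if even k then Beta ((real k + 1)/2) (real n + 1) else 0)) {-1..1}"
proof (induction n arbitrary: k)
  case 0
  have "((\<lambda>x::real. x^k) has_integral (1^(k+1)/(k+1) - (-1)^(k+1)/(k+1))) {-1..1}"
  proof (rule fundamental_theorem_of_calculus)
    fix x :: real
    have "((\<lambda>x. x^(k+1)/(k+1)) has_real_derivative (real (k+1) * x^k)/(k+1)) (at x within {-1..1})"
      by (rule DERIV_cdivide) (use DERIV_pow[of "k+1" x] in \<open>auto intro: has_field_derivative_at_within\<close>)
    then show "((\<lambda>x. x^(k+1)/(k+1)) has_vector_derivative x^k) (at x within {-1..1})"
      by (simp add: has_real_derivative_iff_has_vector_derivative[symmetric] del: of_nat_Suc)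
  qed simp
  moreover have "(1^(k+1)/(k+1) - (-1)^(k+1)/(k+1) :: real) =
      (if even k then Beta ((real k + 1)/2) (real 0 + 1) else 0)"
  proof (cases "even k")
    case True
    have a: "(real k + 1)/2 \<notin> \<int>\<^sub>\<le>\<^sub>0" by (rule nonpos_Ints_pos) simp
    have "Beta ((real k + 1)/2) 1 = 2/(k+1)"
      using Beta_a_1[of "(real k + 1)/2"] by simp
    with True show ?thesis by simp
  next
    case False thus ?thesis by simp
  qed
  ultimately show ?case by simp
next
  case (Suc n)
  have e: "(\<lambda>x::real. x^k * (1-x\<^sup>2)^Suc n) = (\<lambda>x. x^k * (1-x\<^sup>2)^n - x^(k+2) * (1-x\<^sup>2)^n)"
    by (auto simp: algebra_simps power2_eq_square)
  have "((\<lambda>x::real. x^k * (1-x\<^sup>2)^n - x^(k+2) * (1-x\<^sup>2)^n) has_integral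
     ((if even k then Beta ((real k + 1)/2) (real n + 1) else 0) -
      (if even (k+2) then Beta ((real (k+2) + 1)/2) (real n + 1) else 0))) {-1..1}"
    by (intro has_integral_diff Suc.IH)
  moreover have EQ: "((if even k then Beta ((real k + 1)/2) (real n + 1) else 0) -
      (if even (k+2) then Beta ((real (k+2) + 1)/2) (real n + 1) else 0)) =
      (if even k then Beta ((real k + 1)/2) (real (Suc n) + 1) else 0)"
  proof (cases "even k")
    case True
    have a: "(real k + 1)/2 \<notin> \<int>\<^sub>\<le>\<^sub>0" by (rule nonpos_Ints_pos) simp
    have b: "real n + 1 \<notin> \<int>\<^sub>\<le>\<^sub>0" by (rule nonpos_Ints_pos) simp
    have "(real (k+2) + 1)/2 = (real k + 1)/2 + 1" by simp
    hence h: "Beta ((real (k+2) + 1)/2) (real n+1) = Beta ((real k + 1)/2 + 1) (real n + 1)"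
      by (rule arg_cong)
    have h2: "real (Suc n) + 1 = (real n + 1) + 1" by simp
    show ?thesis unfolding h h2 using Beta_plus1_plus1[OF a b] True by simp
  qed simp
  ultimately show ?case unfolding e by (simp only: EQ)
qed

lemma J_int:
  assumes "q \<ge> 1"
  shows "((\<lambda>x::real. x^k * (1-x\<^sup>2)^(q-1)) has_integral
     (if even k then Beta ((real k + 1)/2) (real q) else 0)) {-1..1}"
proof -
  obtain n where "q = Suc n" using assms by (cases q) auto
  hence e1: "q - 1 = n" and e2: "real q = real n + 1" by auto
  show ?thesis unfolding e1 e2 by (rule J_int_aux)
qed

lemma even_sum_reindex:
  fixes T :: "nat \<Rightarrow> 'a::comm_monoid_add"
  assumes "\<And>j. odd j \<Longrightarrow> T j = 0"
  shows "(\<Sum>j\<le>p. T j) = (\<Sum>l=0..p div 2. T (2*l))"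
proof -
  have sub: "(\<lambda>l. 2*l) ` {0..p div 2} \<subseteq> {..p}" by auto
  have "(\<Sum>j\<le>p. T j) = (\<Sum>j\<in>(\<lambda>l. 2*l) ` {0..p div 2}. T j)"
  proof (rule sum.mono_neutral_right[OF _ sub])
    show "\<forall>i\<in>{..p} - (\<lambda>l. 2*l) ` {0..p div 2}. T i = 0"
    proof
      fix i assume i: "i \<in> {..p} - (\<lambda>l. 2*l) ` {0..p div 2}"
      have "odd i"
      proof
        assume "even i"
        then obtain l where "i = 2*l" by blast
        with i show False by auto
      qed
      thus "T i = 0" by (rule assms)
    qed
  qed simp
  also have "\<dots> = (\<Sum>l=0..p div 2. T (2*l))"
    by (subst sum.reindex) (auto simp: inj_on_def)
  finally show ?thesis .
qed

lemma P_int: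
  fixes w m :: complex
  assumes "q \<ge> 1"
  shows "((\<lambda>x::real. (w + m * of_real x)^p * (1 - (of_real x)^2)^(q-1)) has_integral
     (\<Sum>l=0..p div 2. of_nat (p choose (2*l)) * of_real (Beta (real l + 1/2) (real q)) *
        m^(2*l) * w^(p-2*l))) {-1..1}"
proof -
  have e: "(\<lambda>x::real. (w + m * of_real x)^p * (1 - (of_real x)^2)^(q-1)) =
    (\<lambda>x. \<Sum>j\<le>p. (of_nat (p choose j) * m^j * w^(p-j)) * of_real (x^j * (1-x\<^sup>2)^(q-1)))"
  proof
    fix x :: real
    have "(w + m * of_real x)^p = (\<Sum>j\<le>p. of_nat (p choose j) * (m * of_real x)^j * w^(p-j))"
      by (subst add.commute) (rule binomial_ring)
    thus "(w + m * of_real x)^p * (1 - (of_real x)^2)^(q-1) =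
      (\<Sum>j\<le>p. (of_nat (p choose j) * m^j * w^(p-j)) * of_real (x^j * (1-x\<^sup>2)^(q-1)))"
      by (simp add: sum_distrib_left sum_distrib_right power_mult_distrib mult_ac)
  qed
  have "((\<lambda>x. \<Sum>j\<le>p. (of_nat (p choose j) * m^j * w^(p-j)) * of_real (x^j * (1-x\<^sup>2)^(q-1)))
     has_integral (\<Sum>j\<le>p. (of_nat (p choose j) * m^j * w^(p-j)) *
        of_real (if even j then Beta ((real j + 1)/2) (real q) else 0))) {-1..1}"
    by (intro has_integral_sum finite_atMost ballI has_integral_mult_right has_integral_of_real J_int assms)
  moreover have "(\<Sum>j\<le>p. (of_nat (p choose j) * m^j * w^(p-j)) *
        of_real (if even j then Beta ((real j + 1)/2) (real q) else 0) :: complex) =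
     (\<Sum>l=0..p div 2. of_nat (p choose (2*l)) * of_real (Beta (real l + 1/2) (real q)) *
        m^(2*l) * w^(p-2*l))"
    by (subst even_sum_reindex) (auto simp: mult_ac add_divide_distrib)
  ultimately show ?thesis unfolding e by (simp only:)
qed



definition cc :: "real \<Rightarrow> complex" where "cc a = \<i> * of_real a / (\<i> * of_real a - 2)"
definition uu :: "real \<Rightarrow> real \<Rightarrow> complex" where
  "uu a t = (of_real (tanh (t/2)) + cc a) / (1 + cc a * of_real (tanh (t/2)))"
definition w0 :: "real \<Rightarrow> real \<Rightarrow> complex" where "w0 \<beta> a = cis \<beta> * (\<i> * of_real a) / (\<i> * of_real a - 1)"
definition kk :: "real \<Rightarrow> real \<Rightarrow> complex" where "kk \<beta> a = cis \<beta> / (\<i> * of_real a - 1)"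

lemma ia_ne: "\<i> * of_real a - 1 \<noteq> 0" "\<i> * of_real a - 2 \<noteq> 0"
  by (auto simp: complex_eq_iff)

lemma norm_cc: "norm (cc a) < 1"
proof -
  have "norm (\<i> * of_real a) < norm (\<i> * of_real a - 2)"
    using real_sqrt_less_mono[of "a^2" "4+a^2"] by (simp add: cmod_def)
  thus ?thesis unfolding cc_def norm_divide using ia_ne(2)[of a]
    by (simp add: divide_less_eq)
qed

lemma one_cc_ne:
  assumes "\<bar>s\<bar> \<le> 1" shows "1 + cc a * of_real s \<noteq> 0"
proof
  assume "1 + cc a * of_real s = 0"
  hence "norm (cc a * of_real s) = 1" by (metis add_eq_0_iff norm_minus_cancel norm_one)
  moreover have "norm (cc a * of_real s) < 1"
  proof -
    have "norm (cc a) * \<bar>s\<bar> \<le> norm (cc a)" using assms by (simp add: mult_left_le)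
    thus ?thesis using norm_cc[of a] by (simp add: norm_mult)
  qed
  ultimately show False by simp
qed

lemma tanh_abs_le: "\<bar>tanh (x::real)\<bar> \<le> 1"
  using tanh_real_bounds[of x] by auto

lemma geod_alg:
  fixes A S e :: complex
  assumes A1: "A - 1 \<noteq> 0" and A2: "A - 2 \<noteq> 0" and n1: "1 + A / (A - 2) * S \<noteq> 0"
  shows "e * ((2 + A) * S + A) / (A * S - 2 + A) =
         e * A / (A - 1) + e / (A - 1) * ((S + A / (A - 2)) / (1 + A / (A - 2) * S))"
proof -
  have D: "1 + A / (A - 2) * S = (A * S - 2 + A) / (A - 2)" using A2 by (simp add: field_simps)
  have Dn: "A * S - 2 + A \<noteq> 0" using n1 unfolding D by simp
  have N: "S + A / (A - 2) = ((A - 2) * S + A) / (A - 2)" using A2 by (simp add: field_simps)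
  have u: "(S + A / (A - 2)) / (1 + A / (A - 2) * S) = ((A - 2) * S + A) / (A * S - 2 + A)"
    unfolding D N using A2 by simp
  have key: "A * (A * S - 2 + A) + ((A - 2) * S + A) = (A - 1) * ((2 + A) * S + A)"
    by (simp add: algebra_simps)
  have "e * A / (A - 1) + e / (A - 1) * (((A - 2) * S + A) / (A * S - 2 + A))
      = e / (A - 1) * ((A * (A * S - 2 + A) + ((A - 2) * S + A)) / (A * S - 2 + A))"
  proof -
    have "(A * (A * S - 2 + A) + ((A - 2) * S + A)) / (A * S - 2 + A) = A + ((A - 2) * S + A) / (A * S - 2 + A)"
      using Dn by (simp add: add_divide_distrib)
    thus ?thesis by (simp add: distrib_left)
  qed
  also have "\<dots> = e * ((2 + A) * S + A) / (A * S - 2 + A)"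
    unfolding key using A1 by simp
  finally show ?thesis unfolding u by simp
qed

lemma geod_eq: "geod \<beta> a t = w0 \<beta> a + kk \<beta> a * uu a t"
  unfolding geod_def w0_def kk_def uu_def cc_def
  using geod_alg[OF ia_ne(1)[of a] ia_ne(2)[of a] one_cc_ne[OF tanh_abs_le, of a "t/2", unfolded cc_def],
    of "cis \<beta>"]
  by (simp add: mult.assoc)

lemma cis_omega: "cis (omega_ga \<beta> a) = \<i> * cis \<beta> * (1 + \<i> * of_real a) / of_real (sqrt (1 + a\<^sup>2))"
proof -
  have "cis (arctan a) = (1 + \<i> * of_real a) / of_real (sqrt (1 + a\<^sup>2))"
    by (simp add: cis.ctr complex_eq_iff cos_arctan sin_arctan)
  moreover have "cis (pi/2) = \<i>" by (simp add: complex_eq_iff)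
  ultimately show ?thesis unfolding omega_ga_def by (simp add: cis_mult[symmetric] mult_ac)
qed

lemma rr_eq: "(of_real (sqrt (1 + a\<^sup>2)) :: complex) * of_real (sqrt (1 + a\<^sup>2)) =
   (1 + \<i> * of_real a) * (1 - \<i> * of_real a)"
proof -
  have "(of_real (sqrt (1 + a\<^sup>2)) :: complex) * of_real (sqrt (1 + a\<^sup>2)) = of_real (1 + a\<^sup>2)"
  proof -
    have "sqrt (1 + a\<^sup>2) * sqrt (1 + a\<^sup>2) = 1 + a\<^sup>2"
      by (simp add: add_nonneg_nonneg)
    thus ?thesis by (simp only: of_real_mult[symmetric])
  qed
  also have "\<dots> = (1 + \<i> * of_real a) * (1 - \<i> * of_real a)"
    by (simp add: algebra_simps power2_eq_square)
  finally show ?thesis .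
qed

lemma one_ia_ne: "1 + \<i> * of_real a \<noteq> 0" "1 - \<i> * of_real a \<noteq> 0"
  by (auto simp: complex_eq_iff)

lemma neg_div_swap: "- (x / (1 - y)) = (x::complex) / (y - 1)"
  by (metis minus_diff_eq minus_divide_right)

lemma w_eq: "w_ga \<beta> a = w0 \<beta> a"
proof -
  let ?r = "(of_real (sqrt (1 + a\<^sup>2)) :: complex)"
  let ?A = "\<i> * of_real a :: complex"
  have "w_ga \<beta> a = - (?A * cis \<beta> * (1 + ?A)) / (?r * ?r)"
    unfolding w_ga_def cis_omega by (simp add: mult_ac)
  also have "\<dots> = - (?A * cis \<beta>) / (1 - ?A)"
    unfolding rr_eq using one_ia_ne[of a] by simp
  also have "\<dots> = w0 \<beta> a"
    unfolding w0_def using one_ia_ne[of a] ia_ne[of a]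
    by (simp add: neg_div_swap mult_ac)
  finally show ?thesis .
qed

lemma xi_eq: "2 * xi_ga \<beta> a = kk \<beta> a"
proof -
  let ?r = "(of_real (sqrt (1 + a\<^sup>2)) :: complex)"
  let ?A = "\<i> * of_real a :: complex"
  have "2 * xi_ga \<beta> a = \<i> * cis (omega_ga \<beta> a) / ?r"
    unfolding xi_ga_def by simp
  also have "\<dots> = - (cis \<beta> * (1 + ?A)) / (?r * ?r)"
    unfolding cis_omega by (simp add: mult_ac)
  also have "\<dots> = - cis \<beta> / (1 - ?A)"
    unfolding rr_eq using one_ia_ne[of a] by simp
  also have "\<dots> = kk \<beta> a"
    unfolding kk_def using one_ia_ne[of a] ia_ne[of a]
    by (simp add: neg_div_swap)
  finally show ?thesis .
qed



lemma s_vd: "((\<lambda>t. complex_of_real (tanh (t/2))) has_vector_derivative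
     of_real ((1 - tanh (t/2)^2) / 2)) (at t)"
proof -
  have d: "((\<lambda>t::real. t/2) has_real_derivative 1/2) (at t)"
    using DERIV_cdivide[OF DERIV_ident, where c=2 and x=t and s=UNIV] by simp
  have "((\<lambda>t. tanh (t/2)) has_real_derivative ((1 - tanh (t/2)^2) * (1/2))) (at t)"
    by (rule has_field_derivative_tanh[OF _ d]) simp
  thus ?thesis by (intro has_vector_derivative_of_real) simp
qed

lemma U_deriv:
  fixes c z :: complex assumes "1 + c * z \<noteq> 0"
  shows "((\<lambda>z. (z + c) / (1 + c * z)) has_field_derivative (1 - c^2) / (1 + c * z)^2) (at z)"
  using assms
  by (auto intro!: derivative_eq_intros simp: power2_eq_square field_simps)

lemma U_alg:
  fixes c S :: complex assumes n: "1 + c * S \<noteq> 0"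
  shows "(1 - S^2) / 2 * ((1 - c^2) / (1 + c * S)^2) = (1 - ((S + c) / (1 + c * S))^2) / 2"
proof -
  have "1 - ((S + c) / (1 + c * S))^2 = ((1 + c * S)^2 - (S + c)^2) / (1 + c * S)^2"
    using n by (simp add: power_divide diff_divide_distrib)
  also have "(1 + c * S)^2 - (S + c)^2 = (1 - S^2) * (1 - c^2)"
    by (simp add: algebra_simps power2_eq_square)
  finally show ?thesis by simp
qed

lemma uu_vd: "(uu a has_vector_derivative ((1 - (uu a t)^2) / 2)) (at t)"
proof -
  let ?c = "cc a"
  let ?S = "complex_of_real (tanh (t/2))"
  have n: "1 + ?c * ?S \<noteq> 0" by (rule one_cc_ne[OF tanh_abs_le])
  have "(((\<lambda>z. (z + ?c) / (1 + ?c * z)) \<circ> (\<lambda>t. complex_of_real (tanh (t/2)))) has_vector_derivative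
     (of_real ((1 - tanh (t/2)^2) / 2) * ((1 - ?c^2) / (1 + ?c * ?S)^2))) (at t)"
    by (rule field_vector_diff_chain_at[OF s_vd U_deriv[OF n]])
  moreover have B: "((\<lambda>z. (z + ?c) / (1 + ?c * z)) \<circ> (\<lambda>t. complex_of_real (tanh (t/2)))) = uu a"
    by (auto simp: uu_def)
  moreover have C: "of_real ((1 - tanh (t/2)^2) / 2) * ((1 - ?c^2) / (1 + ?c * ?S)^2) = (1 - (uu a t)^2) / 2"
    using U_alg[OF n] unfolding uu_def by simp
  ultimately show ?thesis unfolding B C by blast
qed

lemma geod_vd: "(geod \<beta> a has_vector_derivative (kk \<beta> a * ((1 - (uu a t)^2) / 2))) (at t)"
proof -
  have e: "geod \<beta> a = (\<lambda>t. w0 \<beta> a + kk \<beta> a * uu a t)" by (rule ext) (rule geod_eq)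
  show ?thesis unfolding e
    using has_vector_derivative_add[OF has_vector_derivative_const has_vector_derivative_mult_right[OF uu_vd]]
    by simp
qed

lemma geod_dot_eq: "geod_dot \<beta> a t = kk \<beta> a * ((1 - (uu a t)^2) / 2)"
  unfolding geod_dot_def by (rule vector_derivative_at[OF geod_vd])

lemma half_top: "filterlim (\<lambda>t::real. t/2) at_top at_top"
  unfolding filterlim_at_top
proof
  fix Z :: real show "eventually (\<lambda>t. Z \<le> t/2) at_top"
    using eventually_ge_at_top[of "2*Z"] by eventually_elim simp
qed

lemma half_bot: "filterlim (\<lambda>t::real. t/2) at_bot at_bot"
  unfolding filterlim_at_bot
proof
  fix Z :: real show "eventually (\<lambda>t. t/2 \<le> Z) at_bot"
    using eventually_le_at_bot[of "2*Z"] by eventually_elim simp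
qed

lemma uu_top: "(uu a \<longlongrightarrow> 1) at_top"
proof -
  have n: "1 + cc a * of_real 1 \<noteq> 0" by (rule one_cc_ne) simp
  have "((\<lambda>t. tanh (t/2)) \<longlongrightarrow> (1::real)) at_top"
    by (rule filterlim_compose[OF tanh_real_at_top half_top])
  hence "((\<lambda>t. (complex_of_real (tanh (t/2)) + cc a) / (1 + cc a * complex_of_real (tanh (t/2))))
      \<longlongrightarrow> (of_real 1 + cc a) / (1 + cc a * of_real 1)) at_top"
    using n by (intro tendsto_intros) auto
  thus ?thesis using n unfolding uu_def by simp
qed

lemma uu_bot: "(uu a \<longlongrightarrow> -1) at_bot"
proof -
  have n: "1 + cc a * of_real (-1) \<noteq> 0" by (rule one_cc_ne) simp
  have "((\<lambda>t. tanh (t/2)) \<longlongrightarrow> (-1::real)) at_bot"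
    by (rule filterlim_compose[OF tanh_real_at_bot half_bot])
  hence "((\<lambda>t. (complex_of_real (tanh (t/2)) + cc a) / (1 + cc a * complex_of_real (tanh (t/2))))
      \<longlongrightarrow> (of_real (-1) + cc a) / (1 + cc a * of_real (-1))) at_bot"
    using n by (intro tendsto_intros) auto
  moreover have "(of_real (-1) + cc a) / (1 + cc a * of_real (-1)) = -1"
  proof -
    have "1 - cc a \<noteq> 0" using n by simp
    hence "(cc a - 1) / (1 - cc a) = -1" by (simp add: neg_div_swap[symmetric, of "cc a - 1" "cc a"] divide_eq_minus_1_iff)
    thus ?thesis by simp
  qed
  ultimately show ?thesis unfolding uu_def by simp
qed



definition ff :: "nat \<Rightarrow> nat \<Rightarrow> real \<Rightarrow> real \<Rightarrow> real \<Rightarrow> complex" where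
  "ff p q \<beta> a t = (w0 \<beta> a + kk \<beta> a * uu a t)^p * (kk \<beta> a * ((1 - (uu a t)^2) / 2))^q"

lemma integrand_eq: "(\<lambda>t. geod \<beta> a t ^ p * geod_dot \<beta> a t ^ q) = ff p q \<beta> a"
  by (rule ext) (simp add: ff_def geod_eq geod_dot_eq)

lemma norm_1cS:
  assumes "\<bar>s\<bar> \<le> 1" shows "norm (1 + cc a * of_real s) \<ge> 1 - norm (cc a)"
proof -
  have "norm (cc a * of_real s) \<le> norm (cc a)"
    using assms by (simp add: norm_mult mult_left_le)
  moreover have "norm (1::complex) \<le> norm (1 + cc a * of_real s) + norm (cc a * of_real s)"
    by (metis add_diff_cancel_right' norm_triangle_ineq4)
  ultimately show ?thesis by simp
qed

lemma half_eq: assumes h: "(x::complex)/2 * y = z/2" shows "z = x * y"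
proof -
  have "z = 2 * (z/2)" by simp
  also have "\<dots> = 2 * (x/2 * y)" using h by simp
  also have "\<dots> = x * y" by simp
  finally show ?thesis .
qed

lemma one_minus_uu2:
  "1 - (uu a t)^2 = (1 - (of_real (tanh (t/2)))^2) * (1 - (cc a)^2) / (1 + cc a * of_real (tanh (t/2)))^2"
  using half_eq[OF U_alg[OF one_cc_ne[OF tanh_abs_le, of a "t/2"]]] unfolding uu_def
  by simp

lemma uu_bound: "norm (uu a t) \<le> 2 / (1 - norm (cc a))"
proof -
  let ?S = "complex_of_real (tanh (t/2))"
  have r: "1 - norm (cc a) > 0" using norm_cc[of a] by simp
  have "norm (?S + cc a) \<le> 2"
    using norm_triangle_ineq[of ?S "cc a"] norm_cc[of a] tanh_abs_le[of "t/2"] by simp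
  moreover have "norm (1 + cc a * ?S) \<ge> 1 - norm (cc a)" by (rule norm_1cS[OF tanh_abs_le])
  ultimately show ?thesis unfolding uu_def norm_divide using r
    by (simp add: frac_le)
qed

lemma one_minus_uu2_bound:
  "norm (1 - (uu a t)^2) \<le> 2 / (1 - norm (cc a))^2 * (1 - (tanh (t/2))^2)"
proof -
  let ?s = "tanh (t/2)"
  let ?S = "complex_of_real ?s"
  have r: "1 - norm (cc a) > 0" using norm_cc[of a] by simp
  have s1: "norm (1 - ?S^2) = 1 - ?s^2"
  proof -
    have "1 - ?S^2 = of_real (1 - ?s^2)" by simp
    hence "norm (1 - ?S^2) = \<bar>1 - ?s^2\<bar>" by (simp only: norm_of_real)
    moreover have "1 - ?s^2 \<ge> 0" using tanh_abs_le[of "t/2"] by (simp add: abs_square_le_1)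
    ultimately show ?thesis by simp
  qed
  have c2: "norm (1 - (cc a)^2) \<le> 2"
  proof -
    have "norm (1 - (cc a)^2) \<le> 1 + norm ((cc a)^2)" using norm_triangle_ineq4[of 1 "(cc a)^2"] by simp
    also have "norm ((cc a)^2) \<le> 1" using norm_cc[of a] by (simp add: norm_power power_le_one)
    finally show ?thesis by simp
  qed
  have d: "norm ((1 + cc a * ?S)^2) \<ge> (1 - norm (cc a))^2"
    unfolding norm_power using norm_1cS[OF tanh_abs_le, of a "t/2"] r
    by (intro power_mono) auto
  have "norm (1 - (uu a t)^2) = (1 - ?s^2) * norm (1 - (cc a)^2) / norm ((1 + cc a * ?S)^2)"
    unfolding one_minus_uu2 norm_divide norm_mult s1 ..
  also have "\<dots> \<le> (1 - ?s^2) * 2 / (1 - norm (cc a))^2"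
  proof (rule frac_le)
    show "0 \<le> (1 - ?s^2) * 2" using tanh_abs_le[of "t/2"] by (simp add: abs_square_le_1)
    show "(1 - ?s^2) * norm (1 - (cc a)^2) \<le> (1 - ?s^2) * 2"
      using c2 tanh_abs_le[of "t/2"] by (intro mult_left_mono) (auto simp: abs_square_le_1)
  qed (use r d in auto)
  finally show ?thesis by (simp add: mult.commute)
qed



definition KK :: "nat \<Rightarrow> nat \<Rightarrow> real \<Rightarrow> real \<Rightarrow> real" where
  "KK p q \<beta> a = (norm (w0 \<beta> a) + norm (kk \<beta> a) * (2 / (1 - norm (cc a))))^p *
     (norm (kk \<beta> a) / 2 * (2 / (1 - norm (cc a))^2))^q"

lemma ff_bound:
  assumes q: "q \<ge> 1"
  shows "norm (ff p q \<beta> a t) \<le> KK p q \<beta> a * (1 - (tanh (t/2))^2)"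
proof -
  let ?r = "1 - norm (cc a)"
  let ?x = "1 - (tanh (t/2))^2"
  have x0: "0 \<le> ?x" and x1: "?x \<le> 1" using tanh_abs_le[of "t/2"] by (auto simp: abs_square_le_1)
  have A: "norm (w0 \<beta> a + kk \<beta> a * uu a t) \<le> norm (w0 \<beta> a) + norm (kk \<beta> a) * (2 / ?r)"
  proof -
    have "norm (w0 \<beta> a + kk \<beta> a * uu a t) \<le> norm (w0 \<beta> a) + norm (kk \<beta> a) * norm (uu a t)"
      using norm_triangle_ineq[of "w0 \<beta> a" "kk \<beta> a * uu a t"] by (simp add: norm_mult)
    also have "\<dots> \<le> norm (w0 \<beta> a) + norm (kk \<beta> a) * (2 / ?r)"
      using mult_left_mono[OF uu_bound[of a t] norm_ge_zero[of "kk \<beta> a"]] by simp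
    finally show ?thesis .
  qed
  have B: "norm (kk \<beta> a * ((1 - (uu a t)^2) / 2)) \<le> norm (kk \<beta> a) / 2 * (2 / ?r^2) * ?x"
  proof -
    have "norm (kk \<beta> a * ((1 - (uu a t)^2) / 2)) = norm (kk \<beta> a) / 2 * norm (1 - (uu a t)^2)"
      by (simp add: norm_mult norm_divide)
    also have "\<dots> \<le> norm (kk \<beta> a) / 2 * (2 / ?r^2 * ?x)"
      using one_minus_uu2_bound[of a t] by (intro mult_left_mono) auto
    also have "\<dots> = norm (kk \<beta> a) / 2 * (2 / ?r^2) * ?x" by (simp only: mult.assoc)
    finally show ?thesis .
  qed
  have "norm (ff p q \<beta> a t) = norm (w0 \<beta> a + kk \<beta> a * uu a t)^p * norm (kk \<beta> a * ((1 - (uu a t)^2) / 2))^q"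
    unfolding ff_def by (simp add: norm_mult norm_power)
  also have "\<dots> \<le> (norm (w0 \<beta> a) + norm (kk \<beta> a) * (2 / ?r))^p * (norm (kk \<beta> a) / 2 * (2 / ?r^2) * ?x)^q"
    using norm_cc[of a] by (intro mult_mono power_mono A B) auto
  also have "\<dots> = KK p q \<beta> a * ?x^q"
    unfolding KK_def power_mult_distrib by (simp only: mult.assoc)
  also have "\<dots> \<le> KK p q \<beta> a * ?x"
  proof (rule mult_left_mono)
    show "?x^q \<le> ?x" using power_decreasing[OF q x0 x1] by simp
    have "?r > 0" using norm_cc[of a] by simp
    thus "0 \<le> KK p q \<beta> a" unfolding KK_def by simp
  qed
  finally show ?thesis .
qed

lemma g_integrable: fixes K :: real assumes K: "K \<ge> 0" shows "set_integrable lborel UNIV (\<lambda>t. K * (1 - (tanh (t/2))^2))"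
proof -
  have d: "((\<lambda>t::real. t/2) has_real_derivative 1/2) (at t)" for t
    using DERIV_cdivide[OF DERIV_ident, where c=2 and x=t and s=UNIV] by simp
  have D: "DERIV (\<lambda>t. 2 * K * tanh (t/2)) x :> K * (1 - (tanh (x/2))^2)" for x
    using DERIV_cmult[OF has_field_derivative_tanh[OF cosh_real_nonzero d], where c="2*K"] by simp
  have "set_integrable lborel (einterval (-\<infinity>) \<infinity>) (\<lambda>t. K * (1 - (tanh (t/2))^2))"
  proof (rule interval_integral_FTC_nonneg(1)[where F="\<lambda>t. 2 * K * tanh (t/2)" and A="-2*K" and B="2*K"])
    show "(((\<lambda>t. 2 * K * tanh (t/2)) \<circ> real_of_ereal) \<longlongrightarrow> - 2 * K) (at_right (- \<infinity>))"
      unfolding ereal_tendsto_simps1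
      using tendsto_mult_left[OF filterlim_compose[OF tanh_real_at_bot half_bot], of "2*K"] by (simp add: o_def)
    show "(((\<lambda>t. 2 * K * tanh (t/2)) \<circ> real_of_ereal) \<longlongrightarrow> 2 * K) (at_left \<infinity>)"
      unfolding ereal_tendsto_simps1
      using tendsto_mult_left[OF filterlim_compose[OF tanh_real_at_top half_top], of "2*K"] by (simp add: o_def)
    show "AE x in lborel. - \<infinity> < ereal x \<longrightarrow> ereal x < \<infinity> \<longrightarrow> 0 \<le> K * (1 - (tanh (x/2))^2)"
      using K tanh_abs_le by (intro AE_I2) (auto simp: abs_square_le_1)
  qed (use D in \<open>auto intro!: continuous_intros\<close>)
  thus ?thesis by simp
qed



lemma alg1: fixes k u w :: complex
  shows "2 * (k/2)^Suc n * ((1 - u^2)/2 * ((w + k*u)^p * (1-u^2)^n)) = (w + k*u)^p * (k * ((1 - u^2)/2))^Suc n"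
proof -
  have "2 * (k/2)^Suc n * ((1 - u^2)/2 * ((w + k*u)^p * (1-u^2)^n))
      = (w + k*u)^p * (2 * (k/2)^Suc n * ((1 - u^2)/2 * (1-u^2)^n))" by (simp only: mult_ac)
  also have "2 * (k/2)^Suc n * ((1 - u^2)/2 * (1-u^2)^n) = (k * ((1 - u^2)/2))^Suc n"
    by (simp add: power_mult_distrib power_divide mult_ac)
  finally show ?thesis .
qed

lemma uu_cont: "isCont (uu a) t"
  using uu_vd[of a t] by (rule has_vector_derivative_continuous)

lemma main:
  fixes p q :: nat and \<beta> a :: real
  assumes q: "q \<ge> 1"
  shows "(ff p q \<beta> a has_integral
          2 * (kk \<beta> a / 2) ^ q *
          (\<Sum>l = 0..p div 2. of_nat (p choose (2*l)) *
              of_real (Beta (real l + 1/2) (real q)) *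
              (kk \<beta> a) ^ (2*l) * w0 \<beta> a ^ (p - 2*l))) UNIV"
proof -
  define w where "w = w0 \<beta> a"
  define k where "k = kk \<beta> a"
  define P where "P = (\<lambda>v::complex. (w + k * v)^p * (1 - v^2)^(q-1))"
  define S where "S = (\<Sum>l = 0..p div 2. of_nat (p choose (2*l)) *
              of_real (Beta (real l + 1/2) (real q)) * k ^ (2*l) * w ^ (p - 2*l))"
  have "P holomorphic_on UNIV" unfolding P_def by (intro holomorphic_intros)
  then obtain Q where Q: "\<And>x. (Q has_field_derivative P x) (at x)"
    using holomorphic_convex_primitive'[of UNIV P] by auto
  have Qc: "isCont Q x" for x using Q[of x] by (rule DERIV_isCont)
  define F where "F = (\<lambda>t. 2 * (k/2)^q * Q (uu a t))"
  define f where "f = ff p q \<beta> a"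
  obtain n where qn: "q = Suc n" using q by (cases q) auto
  have Fd: "(F has_vector_derivative f t) (at t)" for t
  proof -
    have "((Q \<circ> uu a) has_vector_derivative ((1 - (uu a t)^2) / 2 * P (uu a t))) (at t)"
      by (rule field_vector_diff_chain_at[OF uu_vd Q])
    from has_vector_derivative_mult_right[OF this, of "2 * (k/2)^q"]
    have "(F has_vector_derivative 2 * (k/2)^q * ((1 - (uu a t)^2) / 2 * P (uu a t))) (at t)"
      unfolding F_def by (simp add: o_def)
    moreover have "2 * (k/2)^q * ((1 - (uu a t)^2) / 2 * P (uu a t)) = f t"
      unfolding f_def ff_def P_def qn w_def[symmetric] k_def[symmetric]
      using alg1 by simp
    ultimately show ?thesis by simp
  qed
  have fc: "isCont f t" for t
    unfolding f_def ff_def by (intro continuous_intros uu_cont) auto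
  have fcont: "continuous_on UNIV f" using fc by (simp add: continuous_on_eq_continuous_at)
  have fint: "set_integrable lborel UNIV f"
  proof (rule set_integrable_bound[OF g_integrable[of "KK p q \<beta> a"]])
    show "KK p q \<beta> a \<ge> 0" using ff_bound[OF q, of p \<beta> a 0] norm_ge_zero[of "ff p q \<beta> a 0"]
      using tanh_abs_le[of 0] by (simp del: norm_ge_zero)
    show "set_borel_measurable lborel UNIV f"
      unfolding set_borel_measurable_def using fcont
      by (auto intro!: borel_measurable_continuous_onI borel_measurable_scaleR)
    show "AE x in lborel. x \<in> UNIV \<longrightarrow> norm (f x) \<le> norm (KK p q \<beta> a * (1 - (tanh (x/2))^2))"
    proof (intro AE_I2 impI)
      fix x :: real
      have "norm (f x) \<le> KK p q \<beta> a * (1 - (tanh (x/2))^2)" unfolding f_def by (rule ff_bound[OF q])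
      also have "\<dots> \<le> norm (KK p q \<beta> a * (1 - (tanh (x/2))^2))" by simp
      finally show "norm (f x) \<le> norm (KK p q \<beta> a * (1 - (tanh (x/2))^2))" .
    qed
  qed
  have FTC: "(LBINT x=-\<infinity>..\<infinity>. f x) = 2 * (k/2)^q * Q 1 - 2 * (k/2)^q * Q (-1)"
  proof (rule interval_integral_FTC_integrable[where F=F])
    show "set_integrable lborel (einterval (-\<infinity>) \<infinity>) f" using fint by simp
    show "((F \<circ> real_of_ereal) \<longlongrightarrow> 2 * (k/2)^q * Q (-1)) (at_right (-\<infinity>))"
      unfolding ereal_tendsto_simps1 F_def
      by (intro tendsto_mult_left isCont_tendsto_compose[OF Qc uu_bot])
    show "((F \<circ> real_of_ereal) \<longlongrightarrow> 2 * (k/2)^q * Q 1) (at_left \<infinity>)"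
      unfolding ereal_tendsto_simps1 F_def
      by (intro tendsto_mult_left isCont_tendsto_compose[OF Qc uu_top])
  qed (use Fd fc in auto)
  have "(LBINT x=-\<infinity>..\<infinity>. f x) = (LINT x:UNIV|lborel. f x)"
    unfolding interval_lebesgue_integral_def by simp
  hence i2: "integral UNIV f = 2 * (k/2)^q * Q 1 - 2 * (k/2)^q * Q (-1)"
    using set_borel_integral_eq_integral(2)[OF fint] FTC by simp
  have fhas: "(f has_integral (2 * (k/2)^q * Q 1 - 2 * (k/2)^q * Q (-1))) UNIV"
    using integrable_integral[OF set_borel_integral_eq_integral(1)[OF fint]] unfolding i2 .
  have "((\<lambda>x. P (of_real x)) has_integral (Q (of_real 1) - Q (of_real (-1)))) {-1..1}"
    by (rule fundamental_theorem_of_calculus) (auto intro!: has_vector_derivative_real_field Q)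
  moreover have "((\<lambda>x. P (of_real x)) has_integral S) {-1..1}"
    unfolding P_def S_def by (rule P_int[OF q])
  ultimately have "Q (of_real 1) - Q (of_real (-1)) = S" by (rule has_integral_unique)
  hence QS: "Q 1 - Q (-1) = S" by simp
  have "2 * (k/2)^q * Q 1 - 2 * (k/2)^q * Q (-1) = 2 * (k/2)^q * S"
    using QS by (simp add: right_diff_distrib[symmetric])
  hence "(f has_integral 2 * (k/2)^q * S) UNIV" using fhas by simp
  thus ?thesis unfolding f_def S_def w_def k_def .
qed

theorem proposition4p5:
  fixes p q :: nat and \<beta> a :: real
  assumes "q \<ge> 1"
  shows "((\<lambda>t. geod \<beta> a t ^ p * geod_dot \<beta> a t ^ q) has_integral
          2 * xi_ga \<beta> a ^ q *
          (\<Sum>l = 0..p div 2. of_nat (p choose (2*l)) *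
              of_real (Beta (real l + 1/2) (real q)) *
              (2 * xi_ga \<beta> a) ^ (2*l) * w_ga \<beta> a ^ (p - 2*l))) UNIV"
proof -
  have "xi_ga \<beta> a = (2 * xi_ga \<beta> a) / 2" by simp
  hence x: "xi_ga \<beta> a = kk \<beta> a / 2" unfolding xi_eq .
  show ?thesis unfolding integrand_eq xi_eq w_eq x using main[OF assms] by simp
qed


end
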